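(* Let $V$ be an $R$-module which admits an infinitesimal character (i.e., every element of the center $Z(R)$ acts on $V$ by a scalar), and let $w\in V$ be a nonzero Whittaker vector of type $\eta$. Then the submodule $Rw\subseteq V$ is irreducible.
   Context: Let $f\in\mathbb{C}[H]$ be a polynomial. $R=R(f)$ is the associative $\mathbb{C}$-algebra generated by $E,F,H$ with relations $EF-FE=f(H)$, $HE-EH=E$, $HF-FH=-F$. Let $R(E)=\mathbb{C}[E]$; $Z(R)$ is the center of $R$. Fix an algebra homomorphism $\eta:R(E)\to\mathbb{C}$ with $\eta(E)\neq 0$. A vector $w$ of an $R$-module is a Whittaker vector of type $\eta$ if $Ew=\eta(E)w$. *)

theory Defs
  imports Complex_Main "HOL-Library.Poly_Mapping" "HOL-Computational_Algebra.Polynomial"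
begin

datatype gen = GE | GF | GH

text \<open>The free associative C-algebra on E,F,H: finitely supported functions on words.\<close>
type_synonym falg = "gen list \<Rightarrow>\<^sub>0 complex"

definition fmul :: "falg \<Rightarrow> falg \<Rightarrow> falg" where
  "fmul p q = (\<Sum>u\<in>Poly_Mapping.keys p. \<Sum>v\<in>Poly_Mapping.keys q. Poly_Mapping.single (u @ v) (Poly_Mapping.lookup p u * Poly_Mapping.lookup q v))"

definition fgen :: "gen \<Rightarrow> falg" where
  "fgen g = Poly_Mapping.single [g] 1"

definition fpolyH :: "complex poly \<Rightarrow> falg" where
  "fpolyH f = (\<Sum>i\<le>degree f. Poly_Mapping.single (replicate i GH) (coeff f i))"

definition rels :: "complex poly \<Rightarrow> falg set" where
  "rels f = { fmul (fgen GE) (fgen GF) - fmul (fgen GF) (fgen GE) - fpolyH f,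
              fmul (fgen GH) (fgen GE) - fmul (fgen GE) (fgen GH) - fgen GE,
              fmul (fgen GH) (fgen GF) - fmul (fgen GF) (fgen GH) + fgen GF }"

text \<open>The two-sided ideal generated by the relations; R(f) = free algebra / rel_ideal f.\<close>
inductive_set rel_ideal :: "complex poly \<Rightarrow> falg set" for f where
  zero: "0 \<in> rel_ideal f"
| gen: "r \<in> rels f \<Longrightarrow> fmul (fmul a r) b \<in> rel_ideal f"
| add: "x \<in> rel_ideal f \<Longrightarrow> y \<in> rel_ideal f \<Longrightarrow> x + y \<in> rel_ideal f"

text \<open>z represents an element of the center Z(R) of R = R(f).\<close>
definition central :: "complex poly \<Rightarrow> falg \<Rightarrow> bool" where
  "central f z \<longleftrightarrow> (\<forall>x. fmul z x - fmul x z \<in> rel_ideal f)"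

definition cvs :: "(complex \<Rightarrow> 'v::ab_group_add \<Rightarrow> 'v) \<Rightarrow> bool" where
  "cvs sm \<longleftrightarrow> (\<forall>v. sm 1 v = v) \<and> (\<forall>a b v. sm (a * b) v = sm a (sm b v))
     \<and> (\<forall>a b v. sm (a + b) v = sm a v + sm b v) \<and> (\<forall>a u v. sm a (u + v) = sm a u + sm a v)"

definition clin :: "(complex \<Rightarrow> 'v::ab_group_add \<Rightarrow> 'v) \<Rightarrow> ('v \<Rightarrow> 'v) \<Rightarrow> bool" where
  "clin sm T \<longleftrightarrow> (\<forall>u v. T (u + v) = T u + T v) \<and> (\<forall>a v. T (sm a v) = sm a (T v))"

fun wact :: "(gen \<Rightarrow> 'v \<Rightarrow> 'v) \<Rightarrow> gen list \<Rightarrow> 'v \<Rightarrow> 'v" where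
  "wact rho [] v = v"
| "wact rho (g # ws) v = rho g (wact rho ws v)"

definition act :: "(complex \<Rightarrow> 'v::ab_group_add \<Rightarrow> 'v) \<Rightarrow> (gen \<Rightarrow> 'v \<Rightarrow> 'v) \<Rightarrow> falg \<Rightarrow> 'v \<Rightarrow> 'v" where
  "act sm rho p v = (\<Sum>u\<in>Poly_Mapping.keys p. sm (Poly_Mapping.lookup p u) (wact rho u v))"

definition is_Rmod :: "complex poly \<Rightarrow> (complex \<Rightarrow> 'v::ab_group_add \<Rightarrow> 'v) \<Rightarrow> (gen \<Rightarrow> 'v \<Rightarrow> 'v) \<Rightarrow> bool" where
  "is_Rmod f sm rho \<longleftrightarrow> cvs sm \<and> (\<forall>g. clin sm (rho g))
     \<and> (\<forall>v. rho GE (rho GF v) - rho GF (rho GE v) = act sm rho (fpolyH f) v)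
     \<and> (\<forall>v. rho GH (rho GE v) - rho GE (rho GH v) = rho GE v)
     \<and> (\<forall>v. rho GH (rho GF v) - rho GF (rho GH v) = - rho GF v)"

definition has_inf_char :: "complex poly \<Rightarrow> (complex \<Rightarrow> 'v::ab_group_add \<Rightarrow> 'v) \<Rightarrow> (gen \<Rightarrow> 'v \<Rightarrow> 'v) \<Rightarrow> bool" where
  "has_inf_char f sm rho \<longleftrightarrow> (\<forall>z. central f z \<longrightarrow> (\<exists>c. \<forall>v. act sm rho z v = sm c v))"

definition submod :: "(complex \<Rightarrow> 'v::ab_group_add \<Rightarrow> 'v) \<Rightarrow> (gen \<Rightarrow> 'v \<Rightarrow> 'v) \<Rightarrow> 'v set \<Rightarrow> bool" where
  "submod sm rho S \<longleftrightarrow> 0 \<in> S \<and> (\<forall>u\<in>S. \<forall>v\<in>S. u + v \<in> S) \<and> (\<forall>a. \<forall>v\<in>S. sm a v \<in> S)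
     \<and> (\<forall>g. \<forall>v\<in>S. rho g v \<in> S)"

definition irreducible_submod :: "(complex \<Rightarrow> 'v::ab_group_add \<Rightarrow> 'v) \<Rightarrow> (gen \<Rightarrow> 'v \<Rightarrow> 'v) \<Rightarrow> 'v set \<Rightarrow> bool" where
  "irreducible_submod sm rho M \<longleftrightarrow> submod sm rho M \<and> M \<noteq> {0}
     \<and> (\<forall>N. submod sm rho N \<and> N \<subseteq> M \<longrightarrow> N = {0} \<or> N = M)"

definition cyc :: "(complex \<Rightarrow> 'v::ab_group_add \<Rightarrow> 'v) \<Rightarrow> (gen \<Rightarrow> 'v \<Rightarrow> 'v) \<Rightarrow> 'v \<Rightarrow> 'v set" where
  "cyc sm rho w = {act sm rho p w | p. True}"

end

theory Submission
  imports Defs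
begin


instantiation list :: (type) monoid_add
begin
definition zero_list :: "'a list" where "zero_list = []"
definition plus_list :: "'a list \<Rightarrow> 'a list \<Rightarrow> 'a list" where "plus_list xs ys = xs @ ys"
instance by standard (auto simp: zero_list_def plus_list_def)
end

lemma pm_expand: "(p::('a \<Rightarrow>\<^sub>0 'b::comm_monoid_add)) = (\<Sum>k\<in>Poly_Mapping.keys p. Poly_Mapping.single k (Poly_Mapping.lookup p k))"
  by (rule poly_mapping_eqI) (auto simp: lookup_sum lookup_single when_def in_keys_iff)

lemma pm_induct[case_names zero single add]:
  assumes "P 0" "\<And>k c. P (Poly_Mapping.single k c)" "\<And>a b. P a \<Longrightarrow> P b \<Longrightarrow> P (a + b)"
  shows "P (p::('a \<Rightarrow>\<^sub>0 'b::comm_monoid_add))"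
proof -
  have "P (\<Sum>k\<in>S. Poly_Mapping.single k (Poly_Mapping.lookup p k))" if "finite S" for S
    using that by (induction S rule: finite_induct) (auto intro: assms)
  then show ?thesis by (subst pm_expand) simp
qed

lemma fmul_eq: "fmul p q = p * q"
proof -
  have "p * q = (\<Sum>u\<in>Poly_Mapping.keys p. Poly_Mapping.single u (Poly_Mapping.lookup p u)) *
       (\<Sum>v\<in>Poly_Mapping.keys q. Poly_Mapping.single v (Poly_Mapping.lookup q v))"
    by (simp flip: pm_expand)
  also have "\<dots> = fmul p q"
    unfolding fmul_def sum_distrib_right sum_distrib_left mult_single plus_list_def by (subst sum.swap) simp
  finally show ?thesis by simp
qed

lemma one_falg: "(1::falg) = Poly_Mapping.single [] 1"
  by (rule poly_mapping_eqI) (simp add: lookup_one lookup_single zero_list_def when_def)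

lemma single_app: "Poly_Mapping.single (u @ v) (a * b) = Poly_Mapping.single u a * (Poly_Mapping.single v b :: falg)"
  by (simp add: mult_single plus_list_def)

lemma scal_comm: "Poly_Mapping.single [] a * (x::falg) = x * Poly_Mapping.single [] a"
proof (induction x rule: pm_induct)
  case zero then show ?case by simp
next
  case (single k c) then show ?case by (simp add: mult_single plus_list_def mult.commute)
next
  case (add a b) then show ?case by (simp add: distrib_left distrib_right)
qed

lemma ideal_mult: "x \<in> rel_ideal f \<Longrightarrow> a * x * b \<in> rel_ideal f"
proof (induction x arbitrary: a b rule: rel_ideal.induct)
  case zero then show ?case by (simp add: rel_ideal.zero)
next
  case (gen r a' b')
  have "a * (a' * r * b') * b = (a * a') * r * (b' * b)" by (simp add: mult.assoc)
  then show ?case using rel_ideal.gen[OF gen(1), of "a*a'" "b'*b"] by (simp add: fmul_eq)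
next
  case (add x y) then show ?case by (simp add: distrib_left distrib_right rel_ideal.add)
qed

lemma rels_ideal: "r \<in> rels f \<Longrightarrow> r \<in> rel_ideal f"
  using rel_ideal.gen[of r f 1 1] by (simp add: fmul_eq)

lemma ideal_neg: "x \<in> rel_ideal f \<Longrightarrow> - x \<in> rel_ideal f"
  using ideal_mult[of x f "-1" 1] by simp

lemma ideal_diff: "x \<in> rel_ideal f \<Longrightarrow> y \<in> rel_ideal f \<Longrightarrow> x - y \<in> rel_ideal f"
  using rel_ideal.add[of x f "-y"] ideal_neg by simp

lemma ideal_lmult: "x \<in> rel_ideal f \<Longrightarrow> a * x \<in> rel_ideal f"
  using ideal_mult[of x f a 1] by simp
lemma ideal_rmult: "x \<in> rel_ideal f \<Longrightarrow> x * b \<in> rel_ideal f"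
  using ideal_mult[of x f 1 b] by simp

abbreviation "EE \<equiv> fgen GE"
abbreviation "FF \<equiv> fgen GF"
abbreviation "HH \<equiv> fgen GH"

lemma r1: "EE * FF - FF * EE - fpolyH f \<in> rel_ideal f"
  by (rule rels_ideal) (simp add: rels_def fmul_eq)
lemma r2: "HH * EE - EE * HH - EE \<in> rel_ideal f"
  by (rule rels_ideal) (simp add: rels_def fmul_eq)
lemma r3: "HH * FF - FF * HH + FF \<in> rel_ideal f"
  by (rule rels_ideal) (simp add: rels_def fmul_eq)




lemma fpolyH_N: "degree p \<le> N \<Longrightarrow> fpolyH p = (\<Sum>i\<le>N. Poly_Mapping.single (replicate i GH) (coeff p i))"
  unfolding fpolyH_def
  by (rule sum.mono_neutral_left) (auto simp: coeff_eq_0)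

lemma fpolyH_0[simp]: "fpolyH 0 = 0"
  by (simp add: fpolyH_def)

lemma fpolyH_add: "fpolyH (p + q) = fpolyH p + fpolyH q"
proof -
  let ?N = "max (degree p) (degree q)"
  have "degree (p+q) \<le> ?N" by (rule degree_add_le) auto
  then show ?thesis
    by (simp add: fpolyH_N[of _ ?N] single_add sum.distrib)
qed

lemma fpolyH_smult: "fpolyH (smult a p) = Poly_Mapping.single [] a * fpolyH p"
  unfolding fpolyH_def by (simp add: sum_distrib_left mult_single plus_list_def)

lemma fpolyH_minus: "fpolyH (- p) = - fpolyH p"
  using fpolyH_add[of p "-p"] by (metis add.right_inverse fpolyH_0 neg_eq_iff_add_eq_0)

lemma fpolyH_diff: "fpolyH (p - q) = fpolyH p - fpolyH q"
  using fpolyH_add[of p "-q"] fpolyH_minus[of q] by simp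

lemma fpolyH_pCons: "fpolyH (pCons a p) = Poly_Mapping.single [] a + HH * fpolyH p"
proof -
  have d: "degree (pCons a p) \<le> Suc (degree p)" by (simp add: degree_pCons_le)
  have "fpolyH (pCons a p) = (\<Sum>i\<le>Suc (degree p). Poly_Mapping.single (replicate i GH) (coeff (pCons a p) i))"
    by (rule fpolyH_N[OF d])
  also have "\<dots> = Poly_Mapping.single [] a + (\<Sum>i\<le>degree p. Poly_Mapping.single (replicate (Suc i) GH) (coeff p i))"
    by (subst sum.atMost_Suc_shift) simp
  also have "(\<Sum>i\<le>degree p. Poly_Mapping.single (replicate (Suc i) GH) (coeff p i)) = HH * fpolyH p"
    unfolding fpolyH_def sum_distrib_left fgen_def
    by (rule sum.cong) (auto simp: mult_single plus_list_def)
  finally show ?thesis .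
qed

lemma fpolyH_const: "fpolyH [:a:] = Poly_Mapping.single [] a"
  using fpolyH_pCons[of a 0] by simp

lemma fpolyH_mult: "fpolyH (p * q) = fpolyH p * fpolyH q"
proof (induction p)
  case 0 then show ?case by simp
next
  case (pCons a p)
  show ?case
    by (simp add: fpolyH_add fpolyH_smult fpolyH_pCons pCons.IH distrib_right mult.assoc)
qed

lemma fpolyH_X: "fpolyH [:0,1:] = HH"
  using fpolyH_pCons[of 0 "[:1:]"] by (simp add: fpolyH_const one_falg[symmetric])

lemma fpolyH_one: "fpolyH 1 = 1"
  by (simp add: one_pCons fpolyH_const one_falg)

lemma H_comm: "HH * fpolyH p = fpolyH p * HH"
proof -
  have "fpolyH [:0,1:] * fpolyH p = fpolyH p * fpolyH [:0,1:]"
    by (simp only: fpolyH_mult[symmetric] mult.commute)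
  then show ?thesis by (simp only: fpolyH_X)
qed

lemma scal_comm': "Poly_Mapping.single [] a * (x::falg) * y = x * (Poly_Mapping.single [] a * y)"
  by (simp add: scal_comm mult.assoc)

lemma E_shift: "EE * fpolyH p - fpolyH (pcompose p [:-1,1:]) * EE \<in> rel_ideal f"
proof (induction p)
  case 0 then show ?case by (simp add: rel_ideal.zero)
next
  case (pCons a p)
  let ?s = "pcompose p [:-1,1:]"
  have m1: "fpolyH [:-1,1:] = HH - 1"
    using fpolyH_pCons[of "-1" "[:1:]"] by (simp add: fpolyH_const one_falg[symmetric] single_uminus)
  have c: "fpolyH (pcompose (pCons a p) [:-1,1:]) = Poly_Mapping.single [] a + (HH - 1) * fpolyH ?s"
    by (simp only: pcompose_pCons fpolyH_add fpolyH_mult fpolyH_const m1)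
  have eq: "EE * fpolyH (pCons a p) - fpolyH (pcompose (pCons a p) [:-1,1:]) * EE
     = - ((HH * EE - EE * HH - EE) * fpolyH p) + (HH - 1) * (EE * fpolyH p - fpolyH ?s * EE)"
    unfolding c fpolyH_pCons by (simp add: algebra_simps scal_comm)
  show ?case unfolding eq
    by (intro rel_ideal.add ideal_neg ideal_rmult ideal_lmult r2 pCons.IH)
qed

lemma F_shift: "FF * fpolyH p - fpolyH (pcompose p [:1,1:]) * FF \<in> rel_ideal f"
proof (induction p)
  case 0 then show ?case by (simp add: rel_ideal.zero)
next
  case (pCons a p)
  let ?s = "pcompose p [:1,1:]"
  have m1: "fpolyH [:1,1:] = HH + 1"
    using fpolyH_pCons[of "1" "[:1:]"] by (simp add: fpolyH_const one_falg[symmetric] add.commute)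
  have c: "fpolyH (pcompose (pCons a p) [:1,1:]) = Poly_Mapping.single [] a + (HH + 1) * fpolyH ?s"
    by (simp only: pcompose_pCons fpolyH_add fpolyH_mult fpolyH_const m1)
  have eq: "FF * fpolyH (pCons a p) - fpolyH (pcompose (pCons a p) [:1,1:]) * FF
     = - ((HH * FF - FF * HH + FF) * fpolyH p) + (HH + 1) * (FF * fpolyH p - fpolyH ?s * FF)"
    unfolding c fpolyH_pCons by (simp add: algebra_simps scal_comm)
  show ?case unfolding eq
    by (intro rel_ideal.add ideal_neg ideal_rmult ideal_lmult r3 pCons.IH)
qed




lemma coeff_lin_pow: "coeff ([:a, 1:] ^ Suc n) n = of_nat (Suc n) * a"
proof (induction n)
  case 0 then show ?case by simp
next
  case (Suc n)
  have "[:a, 1:] ^ Suc (Suc n) = smult a ([:a, 1:] ^ Suc n) + pCons 0 ([:a, 1:] ^ Suc n)"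
    by (simp only: power_Suc[of "[:a,1:]" "Suc n"]) simp
  then have "coeff ([:a, 1:] ^ Suc (Suc n)) (Suc n) = a * coeff ([:a, 1:] ^ Suc n) (Suc n) + coeff ([:a, 1:] ^ Suc n) n"
    by simp
  then show ?case using Suc.IH coeff_linear_power[of a "Suc n"] by (simp add: algebra_simps)
qed

lemma pcompose_Xpow: "pcompose ([:0,1:] ^ n) q = q ^ n"
proof (induction n)
  case 0 then show ?case by (metis pcompose_const one_pCons power_0)
next
  case (Suc n) then show ?case by (simp add: pcompose_mult pcompose_pCons)
qed

abbreviation sig :: "complex poly \<Rightarrow> complex poly" where "sig p \<equiv> pcompose p [:-1,1:]"

lemma u_exists_deg: "degree f \<le> d \<Longrightarrow> \<exists>u. u - sig u = f"
proof (induction d arbitrary: f)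
  case 0
  then obtain b where f: "f = [:b:]" by (metis degree_0_id le_zero_eq)
  show ?case
    by (rule exI[of _ "[:0,b:]"]) (simp add: f pcompose_pCons)
next
  case (Suc d)
  define X :: "complex poly" where "X = [:0,1:] ^ (d+2)"
  define T where "T = X - [:-1,1:] ^ (d+2)"
  define c where "c = coeff f (Suc d) / of_nat (d+2)"
  have sX: "sig X = [:-1,1:] ^ (d+2)" unfolding X_def by (rule pcompose_Xpow)
  have cX: "coeff X k = (if k = d+2 then 1 else 0)" for k
  proof -
    have "X = monom 1 (d+2)" unfolding X_def monom_altdef by simp
    then show ?thesis by simp
  qed
  have cL: "coeff (([:-1,1:]::complex poly) ^ (d+2)) k = 0" if "k > d+2" for k
    using that by (metis coeff_eq_0 degree_linear_power)
  have cL2: "coeff (([:-1,1:]::complex poly) ^ (d+2)) (d+2) = 1" by (rule coeff_linear_power)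
  have cL3: "coeff (([:-1,1:]::complex poly) ^ (d+2)) (Suc d) = - of_nat (d+2)"
  proof -
    have "coeff ([:-1,1:] ^ Suc (Suc d)) (Suc d) = of_nat (Suc (Suc d)) * (-1::complex)" by (rule coeff_lin_pow)
    then show ?thesis by (simp only: add_2_eq_Suc') (metis mult_minus1_right)
  qed
  define g where "g = f - smult c T"
  have "degree g \<le> d"
  proof (rule degree_le, intro allI impI)
    fix i assume "d < i"
    show "coeff g i = 0"
    proof (cases "i = Suc d")
      case True
      have nz: "of_nat (d+2) \<noteq> (0::complex)" by (simp only: add_2_eq_Suc' of_nat_neq_0) simp
      have cT: "coeff T (Suc d) = of_nat (d+2)" unfolding T_def using cX[of "Suc d"] cL3 by simp
      have cc: "c * of_nat (d+2) = coeff f (Suc d)" unfolding c_def using nz by (simp add: field_simps)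
      show ?thesis unfolding g_def using True cT cc by simp
    next
      case False
      then have i: "i > Suc d" using \<open>d < i\<close> by simp
      have "coeff f i = 0" using Suc.prems i by (intro coeff_eq_0) simp
      moreover have "coeff T i = 0" unfolding T_def using cX cL cL2 i
        by (cases "i = d+2") auto
      ultimately show ?thesis unfolding g_def by simp
    qed
  qed
  then obtain u' where u': "u' - sig u' = g" using Suc.IH by blast
  show ?case
  proof (rule exI[of _ "u' + smult c X"])
    have key: "u' + smult c X - sig (u' + smult c X) = f" if "sig X = L" "T = X - L" for L
    proof -
      have "sig (u' + smult c X) = sig u' + smult c L" by (simp only: pcompose_add pcompose_smult that(1))
      then show ?thesis using u' unfolding g_def that(2) by (simp add: algebra_simps smult_diff_right)
    qed
    show "u' + smult c X - sig (u' + smult c X) = f" by (rule key[OF sX T_def])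
  qed
qed

lemma u_exists: "\<exists>u. u - sig u = f"
  using u_exists_deg by blast

definition Om :: "complex poly \<Rightarrow> falg" where "Om u = FF * EE + fpolyH u"

lemma D_E: assumes "u - sig u = f" shows "Om u * EE - EE * Om u \<in> rel_ideal f"
proof -
  have fu: "fpolyH f = fpolyH u - fpolyH (sig u)" using assms fpolyH_diff by metis
  have eq: "Om u * EE - EE * Om u = - ((EE * FF - FF * EE - fpolyH f) * EE)
     + - (EE * fpolyH u - fpolyH (sig u) * EE)"
    unfolding Om_def fu by (simp add: algebra_simps)
  show ?thesis unfolding eq
    by (intro rel_ideal.add ideal_neg ideal_rmult r1 E_shift)
qed

abbreviation tau :: "complex poly \<Rightarrow> complex poly" where "tau p \<equiv> pcompose p [:1,1:]"

lemma D_F: assumes "u - sig u = f" shows "Om u * FF - FF * Om u \<in> rel_ideal f"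
proof -
  have "tau (u - sig u) = tau f" using assms by simp
  moreover have "tau (sig u) = u"
    by (simp add: pcompose_assoc[symmetric] pcompose_pCons)
  ultimately have "tau u - u = tau f" by (simp add: pcompose_diff)
  then have fu: "fpolyH (tau f) = fpolyH (tau u) - fpolyH u" using fpolyH_diff by metis
  have eq: "Om u * FF - FF * Om u = FF * (EE * FF - FF * EE - fpolyH f)
     + (FF * fpolyH f - fpolyH (tau f) * FF) + - (FF * fpolyH u - fpolyH (tau u) * FF)"
    unfolding Om_def fu by (simp add: algebra_simps)
  show ?thesis unfolding eq
    by (intro rel_ideal.add ideal_neg ideal_lmult r1 F_shift)
qed

lemma D_H: "Om u * HH - HH * Om u \<in> rel_ideal f"
proof -
  have eq: "Om u * HH - HH * Om u = - (FF * (HH * EE - EE * HH - EE)) + - ((HH * FF - FF * HH + FF) * EE)"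
    unfolding Om_def using H_comm[of u] by (simp add: algebra_simps)
  show ?thesis unfolding eq
    by (intro rel_ideal.add ideal_neg ideal_lmult ideal_rmult r2 r3)
qed

lemma Om_central: assumes "u - sig u = f" shows "central f (Om u)"
proof -
  let ?D = "\<lambda>x. Om u * x - x * Om u"
  have Dmul: "?D (x * y) = ?D x * y + x * ?D y" for x y by (simp add: algebra_simps)
  have gen: "?D (Poly_Mapping.single [g] 1) \<in> rel_ideal f" for g
    using D_E[OF assms] D_F[OF assms] D_H[of u f] by (cases g) (auto simp: fgen_def)
  have sing: "?D (Poly_Mapping.single k c) \<in> rel_ideal f" for k c
  proof (induction k arbitrary: c)
    case Nil then show ?case using scal_comm[of c "Om u"] by (simp add: rel_ideal.zero)
  next
    case (Cons g k)
    have "Poly_Mapping.single (g # k) c = Poly_Mapping.single [g] 1 * Poly_Mapping.single k c"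
      using single_app[of "[g]" k 1 c] by simp
    then have "?D (Poly_Mapping.single (g # k) c) = ?D (Poly_Mapping.single [g] 1) * Poly_Mapping.single k c
       + Poly_Mapping.single [g] 1 * ?D (Poly_Mapping.single k c)" by (simp only: Dmul)
    then show ?case
      by (simp only:) (intro rel_ideal.add ideal_lmult ideal_rmult gen Cons.IH)
  qed
  have "?D x \<in> rel_ideal f" for x
  proof (induction x rule: pm_induct)
    case zero then show ?case by (simp add: rel_ideal.zero)
  next
    case (single k c) then show ?case by (rule sing)
  next
    case (add a b)
    have "?D (a + b) = ?D a + ?D b" by (simp add: algebra_simps)
    then show ?case using add rel_ideal.add by simp
  qed
  then show ?thesis unfolding central_def fmul_eq by blast
qed




locale rmod =
  fixes f :: "complex poly" and sm :: "complex \<Rightarrow> 'v::ab_group_add \<Rightarrow> 'v" and rho :: "gen \<Rightarrow> 'v \<Rightarrow> 'v"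
  assumes M: "is_Rmod f sm rho"
begin

lemma cvs: "cvs sm" using M by (simp add: is_Rmod_def)
lemma sm1[simp]: "sm 1 v = v" using cvs by (simp add: cvs_def)
lemma smm: "sm (a * b) v = sm a (sm b v)" using cvs by (simp add: cvs_def)
lemma sm_addl: "sm (a + b) v = sm a v + sm b v" using cvs by (simp add: cvs_def)
lemma sm_addr: "sm a (u + v) = sm a u + sm a v" using cvs by (simp add: cvs_def)
lemma sm0[simp]: "sm 0 v = 0" using sm_addl[of 0 0 v] by simp
lemma sm_zero[simp]: "sm a 0 = 0" using sm_addr[of a 0 0] by simp
lemma sm_neg: "sm a (- v) = - sm a v"
  using sm_addr[of a v "-v"] by (simp add: eq_neg_iff_add_eq_0 add.commute)
lemma sm_diff: "sm a (u - v) = sm a u - sm a v"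
  using sm_addr[of a u "-v"] sm_neg by simp
lemma sm_m1: "sm (-1) v = - v"
  using sm_addl[of 1 "-1" v] by (simp add: eq_neg_iff_add_eq_0 add.commute)
lemma sm_sum: "sm a (sum g S) = (\<Sum>x\<in>S. sm a (g x))"
  by (induction S rule: infinite_finite_induct) (auto simp: sm_addr)

lemma clin: "clin sm (rho g)" using M by (simp add: is_Rmod_def)
lemma rho_add: "rho g (u + v) = rho g u + rho g v" using clin by (simp add: clin_def)
lemma rho_sm: "rho g (sm a v) = sm a (rho g v)" using clin by (simp add: clin_def)
lemma rho_0[simp]: "rho g 0 = 0" using rho_add[of g 0 0] by simp

lemma wact_app: "wact rho (u @ w) x = wact rho u (wact rho w x)"
  by (induction u) auto
lemma wact_add: "wact rho u (x + y) = wact rho u x + wact rho u y"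
  by (induction u) (auto simp: rho_add)
lemma wact_sm: "wact rho u (sm a x) = sm a (wact rho u x)"
  by (induction u) (auto simp: rho_sm)
lemma wact_0[simp]: "wact rho u 0 = 0"
  by (induction u) auto

lemma act_S: "finite S \<Longrightarrow> Poly_Mapping.keys p \<subseteq> S \<Longrightarrow>
   act sm rho p v = (\<Sum>u\<in>S. sm (Poly_Mapping.lookup p u) (wact rho u v))"
  unfolding act_def by (rule sum.mono_neutral_left) (auto simp: in_keys_iff)

lemma act_single: "act sm rho (Poly_Mapping.single k c) v = sm c (wact rho k v)"
  by (simp add: act_def)

lemma act_0[simp]: "act sm rho 0 v = 0" by (simp add: act_def)

lemma act_add: "act sm rho (p + q) v = act sm rho p v + act sm rho q v"
proof -
  let ?S = "Poly_Mapping.keys p \<union> Poly_Mapping.keys q"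
  have "Poly_Mapping.keys (p + q) \<subseteq> ?S" by (rule keys_add)
  then show ?thesis
    by (simp add: act_S[of ?S] lookup_add sm_addl sum.distrib)
qed

lemma act_vadd: "act sm rho p (x + y) = act sm rho p x + act sm rho p y"
  by (induction p rule: pm_induct) (auto simp: act_add act_single wact_add sm_addr algebra_simps)

lemma act_vsm: "act sm rho p (sm a x) = sm a (act sm rho p x)"
  by (induction p rule: pm_induct) (auto simp: act_add act_single wact_sm sm_addr smm[symmetric] mult.commute)

lemma act_v0[simp]: "act sm rho p 0 = 0"
  by (induction p rule: pm_induct) (auto simp: act_add act_single)

lemma act_mult: "act sm rho (p * q) x = act sm rho p (act sm rho q x)"
proof (induction p rule: pm_induct)
  case zero then show ?case by simp
next
  case (add a b) then show ?case by (simp add: distrib_right act_add)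
next
  case (single k c)
  show ?case
  proof (induction q rule: pm_induct)
    case zero then show ?case by (simp add: act_single)
  next
    case (single l d)
    show ?case by (simp add: mult_single plus_list_def act_single wact_app wact_sm smm)
  next
    case (add a b) then show ?case by (simp add: distrib_left act_add act_vadd)
  qed
qed

lemma act_neg: "act sm rho (- p) x = - act sm rho p x"
  using act_add[of p "-p" x] by (simp add: eq_neg_iff_add_eq_0 add.commute)
lemma act_diff: "act sm rho (p - q) x = act sm rho p x - act sm rho q x"
  using act_add[of p "-q" x] act_neg by simp

lemma act_fgen: "act sm rho (fgen g) v = rho g v"
  by (simp add: fgen_def act_single)

lemma act_rels: "r \<in> rels f \<Longrightarrow> act sm rho r v = 0"
  using M unfolding rels_def is_Rmod_def
  by (auto simp: fmul_eq act_diff act_add act_mult act_fgen)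

lemma act_I: "r \<in> rel_ideal f \<Longrightarrow> act sm rho r v = 0"
proof (induction r arbitrary: v rule: rel_ideal.induct)
  case zero then show ?case by simp
next
  case (gen r a b) then show ?case by (simp add: fmul_eq act_mult act_rels)
next
  case (add x y) then show ?case by (simp add: act_add)
qed

lemma act_cong: "p - q \<in> rel_ideal f \<Longrightarrow> act sm rho p v = act sm rho q v"
  using act_I[of "p - q" v] by (simp add: act_diff)

end




lemma const_shift: fixes q :: "complex poly" assumes "sig q = q" shows "degree q = 0"
proof -
  have sh: "poly q x = poly q (x - 1)" for x
    using arg_cong[OF assms, of "\<lambda>p. poly p x"] by (simp add: poly_pcompose)
  have n: "poly q (- of_nat n) = poly q 0" for n
  proof (induction n)
    case 0 then show ?case by simp
  next
    case (Suc n)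
    have e: "(- of_nat (Suc n)::complex) = - of_nat n - 1" by simp
    have "poly q (- of_nat (Suc n)) = poly q (- of_nat n)"
      unfolding e using sh[of "- of_nat n"] by simp
    then show ?case using Suc by simp
  qed
  define p' where "p' = q - [:poly q 0:]"
  have "range (\<lambda>n::nat. - (of_nat n :: complex)) \<subseteq> {x. poly p' x = 0}"
    using n by (auto simp: p'_def)
  moreover have "infinite (range (\<lambda>n::nat. - (of_nat n :: complex)))"
    by (rule range_inj_infinite) (auto simp: inj_def)
  ultimately have "infinite {x. poly p' x = 0}" using finite_subset by blast
  then have "p' = 0" using poly_roots_finite by blast
  then have "q = [:poly q 0:]" by (simp add: p'_def)
  then show ?thesis by (metis degree_pCons_0)
qed

lemma shift_deg: fixes q :: "complex poly" assumes "degree q > 0" "q - sig q \<noteq> 0"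
  shows "degree (q - sig q) < degree q"
proof -
  have d1: "degree ([:-1,1:] :: complex poly) = 1" by simp
  have ds: "degree (sig q) = degree q" by (simp add: degree_pcompose)
  have ls: "lead_coeff (sig q) = lead_coeff q"
    using lead_coeff_comp[of "[:-1,1:]::complex poly" q] by simp
  have le: "degree (q - sig q) \<le> degree q" using degree_diff_le[of q "degree q" "sig q"] ds by simp
  have c0: "coeff (q - sig q) (degree q) = 0" using ls ds by simp
  show ?thesis
  proof (rule ccontr)
    assume "\<not> ?thesis"
    then have "degree (q - sig q) = degree q" using le by simp
    then have "lead_coeff (q - sig q) = 0" by (metis c0)
    then show False using assms(2) leading_coeff_0_iff by blast
  qed
qed

context rmod
begin

abbreviation hp where "hp q v \<equiv> act sm rho (fpolyH q) v"

lemma hp_add: "hp (p + q) v = hp p v + hp q v" by (simp add: fpolyH_add act_add)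
lemma hp_diff: "hp (p - q) v = hp p v - hp q v" by (simp add: fpolyH_diff act_diff)
lemma hp_smult: "hp (smult a q) v = sm a (hp q v)" by (simp add: fpolyH_smult act_mult act_single)
lemma hp_mult: "hp (p * q) v = hp p (hp q v)" by (simp add: fpolyH_mult act_mult)
lemma hp_const: "hp [:a:] v = sm a v" by (simp add: fpolyH_const act_single)
lemma hp_one: "hp 1 v = v" by (simp add: fpolyH_one one_falg act_single)

lemma hE: "rho GE (hp q v) = hp (sig q) (rho GE v)"
proof -
  have "rho GE (hp q v) = act sm rho (EE * fpolyH q) v" by (simp add: act_mult act_fgen)
  also have "\<dots> = act sm rho (fpolyH (sig q) * EE) v" by (rule act_cong[OF E_shift])
  finally show ?thesis by (simp add: act_mult act_fgen)
qed

lemma hF: "rho GF (hp q v) = hp (tau q) (rho GF v)"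
proof -
  have "rho GF (hp q v) = act sm rho (FF * fpolyH q) v" by (simp add: act_mult act_fgen)
  also have "\<dots> = act sm rho (fpolyH (tau q) * FF) v" by (rule act_cong[OF F_shift])
  finally show ?thesis by (simp add: act_mult act_fgen)
qed

lemma hH: "rho GH (hp q v) = hp ([:0,1:] * q) v"
  by (simp only: fpolyH_mult fpolyH_X act_mult act_fgen)

lemma submod_act: assumes "submod sm rho S" "v \<in> S" shows "act sm rho p v \<in> S"
proof -
  have w: "wact rho k v \<in> S" for k
    using assms by (induction k) (auto simp: submod_def)
  show ?thesis
  proof (induction p rule: pm_induct)
    case zero then show ?case using assms by (simp add: submod_def)
  next
    case (single k c) then show ?case using assms w by (simp add: submod_def act_single)
  next
    case (add a b) then show ?case using assms by (simp add: submod_def act_add)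
  qed
qed

lemma main:
  assumes inf: "has_inf_char f sm rho" and eta: "eta \<noteq> 0" and w0: "w \<noteq> 0"
    and wh: "rho GE w = sm eta w"
  shows "irreducible_submod sm rho (cyc sm rho w)"
proof -
  obtain u where u: "u - sig u = f" using u_exists by blast
  obtain c where hc: "\<And>v. act sm rho (Om u) v = sm c v"
    using inf Om_central[OF u] unfolding has_inf_char_def by blast
  define g0 where "g0 = smult (1/eta) ([:c:] - u)"
  have "sm c w = sm eta (rho GF w) + hp u w"
    using hc[of w] by (simp add: Om_def act_add act_mult act_fgen wh rho_sm)
  then have "sm eta (rho GF w) = sm c w - hp u w" by (simp add: algebra_simps)
  then have "sm (1/eta) (sm eta (rho GF w)) = sm (1/eta) (sm c w - hp u w)" by simp
  then have Fw: "rho GF w = hp g0 w"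
    using eta by (simp add: smm[symmetric] g0_def hp_smult hp_diff hp_const)
  define P where "P = {hp q w | q. True}"
  have P0: "0 \<in> P" unfolding P_def by (rule CollectI, rule exI[of _ 0]) simp
  have Psub: "submod sm rho P"
    unfolding submod_def
  proof (intro conjI allI ballI)
    show "0 \<in> P" by (rule P0)
  next
    fix x y assume "x \<in> P" "y \<in> P"
    then obtain p q where "x = hp p w" "y = hp q w" unfolding P_def by blast
    then have "x + y = hp (p + q) w" by (simp add: hp_add)
    then show "x + y \<in> P" unfolding P_def by blast
  next
    fix a x assume "x \<in> P"
    then obtain p where "x = hp p w" unfolding P_def by blast
    then have "sm a x = hp (smult a p) w" by (simp add: hp_smult)
    then show "sm a x \<in> P" unfolding P_def by blast
  next
    fix g x assume "x \<in> P"
    then obtain p where x: "x = hp p w" unfolding P_def by blast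
    show "rho g x \<in> P"
    proof (cases g)
      case GE
      have "rho g x = hp (smult eta (sig p)) w" by (simp add: GE x hE wh act_vsm hp_smult)
      then show ?thesis unfolding P_def by blast
    next
      case GF
      have "rho g x = hp (tau p * g0) w" by (simp add: GF x hF Fw hp_mult)
      then show ?thesis unfolding P_def by blast
    next
      case GH
      have "rho g x = hp ([:0,1:] * p) w" by (simp add: GH x hH)
      then show ?thesis unfolding P_def by blast
    qed
  qed
  have wP: "w \<in> P" unfolding P_def by (intro CollectI exI[of _ 1] conjI) (simp_all add: hp_one)
  have cycP: "cyc sm rho w = P"
  proof
    show "cyc sm rho w \<subseteq> P" unfolding cyc_def using submod_act[OF Psub wP] by blast
    show "P \<subseteq> cyc sm rho w" unfolding cyc_def P_def by blast
  qed
  show ?thesis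
    unfolding irreducible_submod_def cycP
  proof (intro conjI allI impI)
    show "submod sm rho P" by (rule Psub)
    show "P \<noteq> {0}" using wP w0 by blast
  next
    fix N assume N: "submod sm rho N \<and> N \<subseteq> P"
    show "N = {0} \<or> N = P"
    proof (cases "N = {0}")
      case True then show ?thesis by simp
    next
      case False
      then have "N \<noteq> {0}" .
      moreover have "0 \<in> N" using N by (simp add: submod_def)
      ultimately obtain v where v: "v \<in> N" "v \<noteq> 0" by blast
      then obtain q0 where q0: "v = hp q0 w" using N unfolding P_def by blast
      have q0nz: "q0 \<noteq> 0" using v q0 by auto
      have JE: "hp (sig q) w \<in> N" if "hp q w \<in> N" for q
      proof -
        have "rho GE (hp q w) \<in> N" using N that by (simp add: submod_def)
        then have "sm (1/eta) (rho GE (hp q w)) \<in> N" using N by (simp add: submod_def)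
        moreover have "sm (1/eta) (rho GE (hp q w)) = hp (sig q) w"
          using eta by (simp add: hE wh act_vsm smm[symmetric])
        ultimately show ?thesis by simp
      qed
      have Jdiff: "hp (p - q) w \<in> N" if "hp p w \<in> N" "hp q w \<in> N" for p q
      proof -
        have "sm (-1) (hp q w) \<in> N" using N that by (simp add: submod_def)
        then have "hp p w + sm (-1) (hp q w) \<in> N" using N that by (simp add: submod_def)
        then show ?thesis by (simp add: hp_diff sm_m1)
      qed
      obtain q where q: "hp q w \<in> N" "q \<noteq> 0"
        and qmin: "\<And>y. hp y w \<in> N \<and> y \<noteq> 0 \<Longrightarrow> degree q \<le> degree y"
        using ex_has_least_nat[of "\<lambda>q. hp q w \<in> N \<and> q \<noteq> 0" q0 degree] v q0 q0nz by blast
      have dq: "degree q = 0"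
      proof (rule ccontr)
        assume d: "degree q \<noteq> 0"
        have rJ: "hp (q - sig q) w \<in> N" using Jdiff[OF q(1) JE[OF q(1)]] .
        show False
        proof (cases "q - sig q = 0")
          case True
          then have "sig q = q" by simp
          then show False using const_shift[of q] d by simp
        next
          case False
          then have "degree (q - sig q) < degree q" using shift_deg d by blast
          moreover have "degree q \<le> degree (q - sig q)" using qmin rJ False by blast
          ultimately show False by simp
        qed
      qed
      define a where "a = coeff q 0"
      have qa: "q = [:a:]" using degree_0_id[OF dq] by (simp add: a_def)
      have a0: "a \<noteq> 0" using q(2) qa by simp
      have "sm a w \<in> N" using q(1) qa by (simp add: hp_const)
      then have "sm (1/a) (sm a w) \<in> N" using N by (simp add: submod_def)
      then have wN: "w \<in> N" using a0 by (simp add: smm[symmetric])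
      have "P \<subseteq> N" unfolding P_def using submod_act[OF _ wN] N by blast
      then show ?thesis using N by blast
    qed
  qed
qed

end



theorem mainTheorem7:
  fixes f :: "complex poly" and sm :: "complex \<Rightarrow> 'v::ab_group_add \<Rightarrow> 'v"
    and rho :: "gen \<Rightarrow> 'v \<Rightarrow> 'v" and eta :: complex and w :: 'v
  assumes "is_Rmod f sm rho"
    and "has_inf_char f sm rho"
    and "eta \<noteq> 0"
    and "w \<noteq> 0"
    and "rho GE w = sm eta w"
  shows "irreducible_submod sm rho (cyc sm rho w)"
proof -
  interpret rmod f sm rho by unfold_locales (rule assms(1))
  show ?thesis by (rule main[OF assms(2-5)])
qed

end
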